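(* In the setting of the context, for every $K=K_{\mathbf x}\times I_n\in\mathcal T_h$ and every $v\in H^1(K)$, $$a_h^K(v,v)\le3\max(1,\tilde c^* )\,\nu\,\big(1+(1+c_{tr})c_{\Pi^N}\big)\Big(h_{K_{\mathbf x}}^{-2}\|v\|^2_{0,K}+\|\nabla_{\mathbf x}v\|^2_{0,K}+h_{K_{\mathbf x}}^{-2}h_{I_n}^2\|\partial_tv\|^2_{0,K}\Big),$$ and consequently, for every $v\in H^1(\mathcal T_h)$, $$a_h(v,v)\le3\max(1,\tilde c^* )\,\nu\,\big(1+(1+c_{tr})c_{\Pi^N}\big)\sum_{K\in\mathcal T_h}\Big(h_{K_{\mathbf x}}^{-2}\|v\|^2_{0,K}+\|\nabla_{\mathbf x}v\|^2_{0,K}+h_{K_{\mathbf x}}^{-2}h_{I_n}^2\|\partial_tv\|^2_{0,K}\Big).$$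
   Context: Let $d\in\{1,2,3\}$, $\nu>0$, $p\ge1$; $\mathbb P_p(D)$: polynomials of total degree $\le p$. $\mathcal T_h$ is a space-time mesh of elements $K=K_{\mathbf x}\times I_n$, with $K_{\mathbf x}$ polytopes of a spatial mesh and $I_n=(t_{n-1},t_n)$, $h_{I_n}=t_n-t_{n-1}$, $h_{K_{\mathbf x}}=\mathrm{diam}(K_{\mathbf x})$; $H^1(\mathcal T_h)$ denotes functions whose restriction to each $K$ is in $H^1(K)$. On $K$, $\Pi^N_pv\in\mathbb P_p(K)$ is defined by $\int_K\nabla_{\mathbf x}q\cdot\nabla_{\mathbf x}(\Pi^N_pv-v)=0$ $\forall q\in\mathbb P_p(K)$, $\int_Kq(t)(\Pi^N_pv-v)=0$ $\forall q\in\mathbb P_{p-1}(I_n)$, $\int_{K_{\mathbf x}}(\Pi^N_pv-v)(\cdot,t_{n-1})=0$. Let $a^K(u,v)=\nu(\nabla_{\mathbf x}u,\nabla_{\mathbf x}v)_{0,K}$ and $a_h^K(u,v)=a^K(\Pi^N_pu,\Pi^N_pv)+\nu S^K((I-\Pi^N_p)u,(I-\Pi^N_p)v)$, $a_h=\sum_Ka_h^K$, where $S^K$ is a symmetric positive semidefinite bilinear form satisfying $S^K(w,w)\le\tilde c^*(h_{K_{\mathbf x}}^{-2}\|w\|^2_{0,K}+\|\nabla_{\mathbf x}w\|^2_{0,K}+h_{K_{\mathbf x}}^{-2}h_{I_n}^2\|\partial_tw\|^2_{0,K})$ for all $w\in H^1(K)$. The constant $c_{tr}>0$ is such that $h_{I_n}\|w(\cdot,t_{n-1})\|^2_{0,K_{\mathbf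 x}}\le c_{tr}(\|w\|^2_{0,K}+h_{I_n}^2\|\partial_tw\|^2_{0,K})$ for all $w\in H^1(K)$. The constant $c_{\Pi^N}>0$ is such that for all $q\in\mathbb P_p(K)$: $\|q\|^2_{0,K}+h_{K_{\mathbf x}}^2\|\nabla_{\mathbf x}q\|^2_{0,K}+h_{I_n}^2\|\partial_tq\|^2_{0,K}\le c_{\Pi^N}\big(h_{K_{\mathbf x}}^2\|\nabla_{\mathbf x}q\|^2_{0,K}+\|P q\|^2_{0,K}+h_{I_n}\|\overline{q(\cdot,t_{n-1})}\|^2_{0,K_{\mathbf x}}\big)$, where $P$ is the $L^2(K)$-orthogonal projection onto $\mathbb P_{p-1}(I_n)$ (polynomials of degree $\le p-1$ in $t$ only, viewed as functions on $K$) and $\overline{g}$ is the mean value of $g$ over $K_{\mathbf x}$. *)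

theory Defs
  imports "HOL-Analysis.Analysis"
begin

type_synonym 'd pt = "(real^'d) \<times> real"   (* space-time point (x,t) *)

fun cdiff :: "nat \<Rightarrow> ('a::euclidean_space \<Rightarrow> real) \<Rightarrow> bool" where
  "cdiff 0 f = continuous_on UNIV f"
| "cdiff (Suc k) f = (f differentiable_on UNIV \<and>
       (\<forall>b\<in>Basis. cdiff k (\<lambda>z. frechet_derivative f (at z) b)))"

definition smooth :: "('a::euclidean_space \<Rightarrow> real) \<Rightarrow> bool" where
  "smooth f \<longleftrightarrow> (\<forall>k. cdiff k f)"

definition tsupport :: "('a::euclidean_space \<Rightarrow> real) \<Rightarrow> 'a set" where
  "tsupport f = closure {z. f z \<noteq> 0}"

definition test_fun :: "'a::euclidean_space set \<Rightarrow> ('a \<Rightarrow> real) \<Rightarrow> bool" where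
  "test_fun U \<phi> \<longleftrightarrow> smooth \<phi> \<and> compact (tsupport \<phi>) \<and> tsupport \<phi> \<subseteq> U"

definition L2 :: "'a::euclidean_space set \<Rightarrow> ('a \<Rightarrow> real) \<Rightarrow> bool" where
  "L2 U f \<longleftrightarrow> set_borel_measurable lborel U f \<and> set_integrable lborel U (\<lambda>z. (f z)^2)"

definition nsq :: "'a::euclidean_space set \<Rightarrow> ('a \<Rightarrow> real) \<Rightarrow> real" where
  "nsq U f = (LINT z:U|lborel. (f z)^2)"

definition weak_deriv :: "'a::euclidean_space set \<Rightarrow> ('a \<Rightarrow> real) \<Rightarrow> 'a \<Rightarrow> ('a \<Rightarrow> real) \<Rightarrow> bool" where
  "weak_deriv U v b g \<longleftrightarrow> (\<forall>\<phi>. test_fun U \<phi> \<longrightarrow>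
      (LINT z:U|lborel. v z * frechet_derivative \<phi> (at z) b) = - (LINT z:U|lborel. g z * \<phi> z))"

definition ex :: "'d::finite \<Rightarrow> 'd pt" where "ex i = (axis i 1, 0)"
definition et :: "'d::finite pt" where "et = (0, 1)"

definition H1w :: "'d::finite pt set \<Rightarrow> ('d pt \<Rightarrow> real) \<Rightarrow> ('d \<Rightarrow> 'd pt \<Rightarrow> real)
                   \<Rightarrow> ('d pt \<Rightarrow> real) \<Rightarrow> bool" where
  "H1w K v gx gt \<longleftrightarrow> L2 K v \<and> (\<forall>i. L2 K (gx i) \<and> weak_deriv K v (ex i) (gx i))
                       \<and> L2 K gt \<and> weak_deriv K v et gt"

text \<open>tr is the trace of v on the bottom face Kx x {t0} of K = Kx x (t0,t1)
  (weak characterisation via integration by parts in t)\<close>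
definition bottom_trace :: "(real^'d::finite) set \<Rightarrow> real \<Rightarrow> real \<Rightarrow> ('d pt \<Rightarrow> real)
                   \<Rightarrow> ('d pt \<Rightarrow> real) \<Rightarrow> (real^'d \<Rightarrow> real) \<Rightarrow> bool" where
  "bottom_trace Kx t0 t1 v gt tr \<longleftrightarrow> L2 Kx tr \<and>
     (\<forall>\<phi>. smooth \<phi> \<and> compact (tsupport \<phi>) \<and> tsupport \<phi> \<subseteq> Kx \<times> {..<t1} \<longrightarrow>
        (LINT z:(Kx \<times> {t0<..<t1})|lborel. v z * frechet_derivative \<phi> (at z) et)
      + (LINT z:(Kx \<times> {t0<..<t1})|lborel. gt z * \<phi> z)
      = - (LINT x:Kx|lborel. tr x * \<phi> (x, t0)))"

definition dx :: "'d::finite \<Rightarrow> ('d pt \<Rightarrow> real) \<Rightarrow> 'd pt \<Rightarrow> real" where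
  "dx i f z = frechet_derivative f (at z) (ex i)"
definition dt :: "('d::finite pt \<Rightarrow> real) \<Rightarrow> 'd pt \<Rightarrow> real" where
  "dt f z = frechet_derivative f (at z) et"

definition gradsq :: "'d::finite pt set \<Rightarrow> ('d pt \<Rightarrow> real) \<Rightarrow> real" where
  "gradsq K f = (\<Sum>i\<in>UNIV. nsq K (dx i f))"

definition ppoly :: "nat \<Rightarrow> ('d::finite pt \<Rightarrow> real) \<Rightarrow> bool" where
  "ppoly p q \<longleftrightarrow> (\<exists>c :: ('d \<Rightarrow> nat) \<times> nat \<Rightarrow> real.
     q = (\<lambda>(x,t). \<Sum>\<alpha>\<in>{\<alpha>. sum (fst \<alpha>) UNIV + snd \<alpha> \<le> p}.
              c \<alpha> * (\<Prod>i\<in>UNIV. (x$i) ^ (fst \<alpha> i)) * t ^ (snd \<alpha>)))"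

definition tpoly :: "nat \<Rightarrow> ('d::finite pt \<Rightarrow> real) \<Rightarrow> bool" where
  "tpoly m s \<longleftrightarrow> (\<exists>c :: nat \<Rightarrow> real. s = (\<lambda>(x,t). \<Sum>k\<le>m. c k * t ^ k))"

definition is_tproj :: "'d::finite pt set \<Rightarrow> nat \<Rightarrow> ('d pt \<Rightarrow> real) \<Rightarrow> ('d pt \<Rightarrow> real) \<Rightarrow> bool" where
  "is_tproj K p f r \<longleftrightarrow> tpoly (p - 1) r \<and>
     (\<forall>s. tpoly (p - 1) s \<longrightarrow> (LINT z:K|lborel. (f z - r z) * s z) = 0)"

definition mean :: "(real^'d::finite) set \<Rightarrow> (real^'d \<Rightarrow> real) \<Rightarrow> real" where
  "mean Kx g = (LINT x:Kx|lborel. g x) / measure lborel Kx"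

definition is_PiN :: "nat \<Rightarrow> (real^'d::finite) set \<Rightarrow> real \<Rightarrow> real \<Rightarrow> ('d pt \<Rightarrow> real)
        \<Rightarrow> ('d \<Rightarrow> 'd pt \<Rightarrow> real) \<Rightarrow> (real^'d \<Rightarrow> real) \<Rightarrow> ('d pt \<Rightarrow> real) \<Rightarrow> bool" where
  "is_PiN p Kx t0 t1 v gx tr q \<longleftrightarrow> ppoly p q
     \<and> (\<forall>s. ppoly p s \<longrightarrow>
          (\<Sum>i\<in>UNIV. LINT z:(Kx \<times> {t0<..<t1})|lborel. dx i s z * (dx i q z - gx i z)) = 0)
     \<and> (\<forall>s. tpoly (p - 1) s \<longrightarrow> (LINT z:(Kx \<times> {t0<..<t1})|lborel. s z * (q z - v z)) = 0)
     \<and> (LINT x:Kx|lborel. q (x, t0) - tr x) = 0"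

definition polytopal :: "(real^'d::finite) set \<Rightarrow> bool" where
  "polytopal Kx \<longleftrightarrow> (\<exists>P. finite P \<and> (\<forall>Q\<in>P. polytope Q) \<and> Kx = interior (\<Union>P))
                     \<and> connected Kx \<and> Kx \<noteq> {}"

definition rhsK :: "(real^'d::finite) set \<Rightarrow> real \<Rightarrow> real \<Rightarrow> ('d pt \<Rightarrow> real)
        \<Rightarrow> ('d \<Rightarrow> 'd pt \<Rightarrow> real) \<Rightarrow> ('d pt \<Rightarrow> real) \<Rightarrow> real" where
  "rhsK Kx t0 t1 w gwx gwt =
     nsq (Kx \<times> {t0<..<t1}) w / (diameter Kx)^2 + (\<Sum>i\<in>UNIV. nsq (Kx \<times> {t0<..<t1}) (gwx i))
     + (t1 - t0)^2 / (diameter Kx)^2 * nsq (Kx \<times> {t0<..<t1}) gwt"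

end

theory Submission
  imports Defs
begin


definition L2M :: "'a measure \<Rightarrow> ('a \<Rightarrow> real) \<Rightarrow> bool" where
  "L2M M f \<longleftrightarrow> f \<in> borel_measurable M \<and> integrable M (\<lambda>z. (f z)^2)"

lemma L2M_prod: "L2M M f \<Longrightarrow> L2M M g \<Longrightarrow> integrable M (\<lambda>z. f z * g z)"
proof -
  assume a: "L2M M f" "L2M M g"
  have m: "f \<in> borel_measurable M" "g \<in> borel_measurable M"
    using a unfolding L2M_def by auto
  have i: "integrable M (\<lambda>z. (f z)^2 + (g z)^2)" using a unfolding L2M_def by auto
  have b: "\<And>z. norm (f z * g z) \<le> norm ((f z)^2 + (g z)^2)"
  proof -
    fix z
    have "\<bar>f z * g z\<bar> \<le> (f z)^2 + (g z)^2"
    proof -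
      have "2 * (\<bar>f z\<bar> * \<bar>g z\<bar>) \<le> \<bar>f z\<bar>^2 + \<bar>g z\<bar>^2"
        using sum_squares_bound[of "\<bar>f z\<bar>" "\<bar>g z\<bar>"] by (simp add: mult.assoc)
      moreover have "0 \<le> \<bar>f z\<bar> * \<bar>g z\<bar>" by simp
      ultimately have "\<bar>f z\<bar> * \<bar>g z\<bar> \<le> \<bar>f z\<bar>^2 + \<bar>g z\<bar>^2" by linarith
      then show ?thesis by (simp add: abs_mult)
    qed
    then show "norm (f z * g z) \<le> norm ((f z)^2 + (g z)^2)" by simp
  qed
  show ?thesis
    by (rule Bochner_Integration.integrable_bound[OF i]) (use m b in auto)
qed

lemma L2M_add: "L2M M f \<Longrightarrow> L2M M g \<Longrightarrow> L2M M (\<lambda>z. f z + g z)"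
proof -
  assume a: "L2M M f" "L2M M g"
  have "integrable M (\<lambda>z. (f z)^2 + 2 * (f z * g z) + (g z)^2)"
    using a L2M_prod[OF a] unfolding L2M_def by auto
  then show ?thesis using a unfolding L2M_def by (auto simp: power2_sum ac_simps)
qed

lemma L2M_cmult: "L2M M f \<Longrightarrow> L2M M (\<lambda>z. c * f z)"
  unfolding L2M_def by (auto simp: power_mult_distrib)

lemma L2M_diff: "L2M M f \<Longrightarrow> L2M M g \<Longrightarrow> L2M M (\<lambda>z. f z - g z)"
  using L2M_add[of M f "\<lambda>z. (-1) * g z"] L2M_cmult[of M g "-1"] by simp

lemma L2M_bounded:
  assumes "finite_measure M" "f \<in> borel_measurable M" "\<And>z. z \<in> space M \<Longrightarrow> \<bar>f z\<bar> \<le> B"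
  shows "L2M M f"
  unfolding L2M_def
proof (intro conjI)
  show "f \<in> borel_measurable M" by fact
  show "integrable M (\<lambda>z. (f z)^2)"
  proof (rule finite_measure.integrable_const_bound[OF assms(1), where B="B^2"])
    show "AE x in M. norm ((f x)^2) \<le> B^2"
      using assms(3) by (auto intro!: AE_I2 simp: abs_le_square_iff[symmetric] power2_abs)
         (metis abs_ge_zero abs_le_square_iff abs_of_nonneg order.trans)
    show "(\<lambda>x. (f x)^2) \<in> borel_measurable M" using assms(2) by measurable
  qed
qed

lemma nsq_nonneg: "0 \<le> integral\<^sup>L M (\<lambda>z. (f z)^2 :: real)"
  by (rule integral_nonneg_AE) auto



lemma int_lin4:
  fixes f1 f2 f3 f4 :: "'a \<Rightarrow> real"
  assumes "integrable M f1" "integrable M f2" "integrable M f3" "integrable M f4"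
  shows "integral\<^sup>L M (\<lambda>z. f1 z + a * f2 z + b * f3 z + c * f4 z)
       = integral\<^sup>L M f1 + a * integral\<^sup>L M f2 + b * integral\<^sup>L M f3 + c * integral\<^sup>L M f4"
  using assms by (simp add: integral_add integral_mult_right)

lemma L2M_sq_zero:
  assumes "L2M M u" "integral\<^sup>L M (\<lambda>z. (u z)^2) = 0" "L2M M a"
  shows "integral\<^sup>L M (\<lambda>z. a z * u z) = 0"
proof -
  have "AE z in M. (u z)^2 = 0"
    using assms(1,2) integral_nonneg_eq_0_iff_AE[of M "\<lambda>z. (u z)^2"] unfolding L2M_def by auto
  then have "AE z in M. a z * u z = 0" by eventually_elim auto
  then have "integral\<^sup>L M (\<lambda>z. a z * u z) = integral\<^sup>L M (\<lambda>z. 0)"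
    by (intro integral_cong_AE) (use assms(1,3) in \<open>auto simp: L2M_def\<close>)
  then show ?thesis by simp
qed

lemma proj_step:
  fixes M :: "'a measure" and W W' :: "('a \<Rightarrow> real) \<Rightarrow> bool" and e :: "'a \<Rightarrow> real"
  assumes WL2: "\<And>s. W s \<Longrightarrow> L2M M s"
    and Wadd: "\<And>a b. W a \<Longrightarrow> W b \<Longrightarrow> W (\<lambda>z. a z + b z)"
    and Wmul: "\<And>a c. W a \<Longrightarrow> W (\<lambda>z. c * a z)"
    and eL2: "L2M M e"
    and IH: "\<And>g. L2M M g \<Longrightarrow> \<exists>r. W r \<and> (\<forall>s. W s \<longrightarrow> integral\<^sup>L M (\<lambda>z. (g z - r z) * s z) = 0)"
    and W': "\<And>s. W' s \<longleftrightarrow> (\<exists>s' c. W s' \<and> s = (\<lambda>z. s' z + c * e z))"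
    and gL2: "L2M M g"
  shows "\<exists>r. W' r \<and> (\<forall>s. W' s \<longrightarrow> integral\<^sup>L M (\<lambda>z. (g z - r z) * s z) = 0)"
proof -
  obtain re where re: "W re" "\<And>s. W s \<Longrightarrow> integral\<^sup>L M (\<lambda>z. (e z - re z) * s z) = 0"
    using IH[OF eL2] by blast
  obtain r0 where r0: "W r0" "\<And>s. W s \<Longrightarrow> integral\<^sup>L M (\<lambda>z. (g z - r0 z) * s z) = 0"
    using IH[OF gL2] by blast
  define u where "u = (\<lambda>z. e z - re z)"
  have uL2: "L2M M u" unfolding u_def by (rule L2M_diff[OF eL2 WL2[OF re(1)]])
  have gr0L2: "L2M M (\<lambda>z. g z - r0 z)" by (rule L2M_diff[OF gL2 WL2[OF r0(1)]])
  define a where "a = integral\<^sup>L M (\<lambda>z. (g z - r0 z) * u z)"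
  define n where "n = integral\<^sup>L M (\<lambda>z. (u z)^2)"
  have decomp: "\<And>s. W' s \<Longrightarrow> \<exists>s'' c. W s'' \<and> s = (\<lambda>z. s'' z + c * u z)"
  proof -
    fix s assume "W' s"
    then obtain s' c where s': "W s'" "s = (\<lambda>z. s' z + c * e z)" using W' by blast
    have "W (\<lambda>z. s' z + c * re z)" using Wadd[OF s'(1) Wmul[OF re(1)]] .
    moreover have "s = (\<lambda>z. (s' z + c * re z) + c * u z)"
      using s'(2) unfolding u_def by (auto simp: algebra_simps)
    ultimately show "\<exists>s'' c. W s'' \<and> s = (\<lambda>z. s'' z + c * u z)" by blast
  qed
  show ?thesis
  proof (cases "n = 0")
    case True
    have "W' r0" unfolding W' by (rule exI[of _ r0], rule exI[of _ 0]) (use r0 in auto)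
    moreover have "integral\<^sup>L M (\<lambda>z. (g z - r0 z) * s z) = 0" if Ws: "W' s" for s
    proof -
      obtain s'' c where s'': "W s''" "s = (\<lambda>z. s'' z + c * u z)" using decomp[OF Ws] by blast
      have i1: "integrable M (\<lambda>z. (g z - r0 z) * s'' z)" by (rule L2M_prod[OF gr0L2 WL2[OF s''(1)]])
      have i2: "integrable M (\<lambda>z. (g z - r0 z) * u z)" by (rule L2M_prod[OF gr0L2 uL2])
      have "integral\<^sup>L M (\<lambda>z. (g z - r0 z) * s z)
          = integral\<^sup>L M (\<lambda>z. (g z - r0 z) * s'' z + c * ((g z - r0 z) * u z))"
        unfolding s''(2) by (simp add: algebra_simps)
      also have "\<dots> = integral\<^sup>L M (\<lambda>z. (g z - r0 z) * s'' z) + c * integral\<^sup>L M (\<lambda>z. (g z - r0 z) * u z)"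
        using i1 i2 by simp
      also have "\<dots> = 0"
        using r0(2)[OF s''(1)] L2M_sq_zero[OF uL2 True[unfolded n_def] gr0L2] by simp
      finally show ?thesis .
    qed
    ultimately show ?thesis by blast
  next
    case False
    define \<alpha> where "\<alpha> = a / n"
    define r where "r = (\<lambda>z. r0 z + \<alpha> * u z)"
    have Wc: "W (\<lambda>z. r0 z + (- \<alpha>) * re z)" by (intro Wadd Wmul r0 re)
    have "W' r" unfolding W'
      by (rule exI[of _ "\<lambda>z. r0 z + (- \<alpha>) * re z"], rule exI[of _ \<alpha>])
         (use Wc in \<open>auto simp: r_def u_def algebra_simps\<close>)
    moreover have "integral\<^sup>L M (\<lambda>z. (g z - r z) * s z) = 0" if Ws: "W' s" for s
    proof -
      obtain s'' c where s'': "W s''" "s = (\<lambda>z. s'' z + c * u z)" using decomp[OF Ws] by blast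
      have i1: "integrable M (\<lambda>z. (g z - r0 z) * s'' z)" by (rule L2M_prod[OF gr0L2 WL2[OF s''(1)]])
      have i2: "integrable M (\<lambda>z. u z * s'' z)" by (rule L2M_prod[OF uL2 WL2[OF s''(1)]])
      have i3: "integrable M (\<lambda>z. (g z - r0 z) * u z)" by (rule L2M_prod[OF gr0L2 uL2])
      have i4: "integrable M (\<lambda>z. (u z)^2)" using uL2 unfolding L2M_def by auto
      have ue: "integral\<^sup>L M (\<lambda>z. u z * s'' z) = 0" using re(2)[OF s''(1)] unfolding u_def .
      have "integral\<^sup>L M (\<lambda>z. (g z - r z) * s z)
          = integral\<^sup>L M (\<lambda>z. (g z - r0 z) * s'' z + (-\<alpha>) * (u z * s'' z) + c * ((g z - r0 z) * u z) + (- c * \<alpha>) * (u z)^2)"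
        unfolding s''(2) r_def by (simp add: algebra_simps power2_eq_square)
      also have "\<dots> = integral\<^sup>L M (\<lambda>z. (g z - r0 z) * s'' z) + (-\<alpha>) * integral\<^sup>L M (\<lambda>z. u z * s'' z)
             + c * integral\<^sup>L M (\<lambda>z. (g z - r0 z) * u z) + (- c * \<alpha>) * integral\<^sup>L M (\<lambda>z. (u z)^2)"
        by (rule int_lin4[OF i1 i2 i3 i4])
      also have "\<dots> = c * a - c * \<alpha> * n"
        using r0(2)[OF s''(1)] ue unfolding a_def n_def by simp
      also have "\<dots> = 0" using False unfolding \<alpha>_def by simp
      finally show ?thesis .
    qed
    ultimately show ?thesis by blast
  qed
qed



lemma tpoly_alt: "tpoly m s \<longleftrightarrow> (\<exists>c. s = (\<lambda>z. \<Sum>k\<le>m. c k * (snd z)^k))"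
  unfolding tpoly_def by (simp add: split_beta')

lemma tpoly_add: "tpoly m a \<Longrightarrow> tpoly m b \<Longrightarrow> tpoly m (\<lambda>z. a z + b z)"
  unfolding tpoly_alt
proof (elim exE)
  fix c d assume "a = (\<lambda>z. \<Sum>k\<le>m. c k * snd z ^ k)" "b = (\<lambda>z. \<Sum>k\<le>m. d k * snd z ^ k)"
  then show "\<exists>e. (\<lambda>z. a z + b z) = (\<lambda>z. \<Sum>k\<le>m. e k * snd z ^ k)"
    by (intro exI[of _ "\<lambda>k. c k + d k"]) (auto simp: sum.distrib algebra_simps)
qed

lemma tpoly_mul: "tpoly m a \<Longrightarrow> tpoly m (\<lambda>z. c * a z)"
  unfolding tpoly_alt
proof (elim exE)
  fix d assume "a = (\<lambda>z. \<Sum>k\<le>m. d k * snd z ^ k)"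
  then show "\<exists>e. (\<lambda>z. c * a z) = (\<lambda>z. \<Sum>k\<le>m. e k * snd z ^ k)"
    by (intro exI[of _ "\<lambda>k. c * d k"]) (auto simp: sum_distrib_left algebra_simps)
qed

lemma tpoly_0: "tpoly 0 s \<longleftrightarrow> (\<exists>s' c. s' = (\<lambda>_. 0) \<and> s = (\<lambda>z. s' z + c * (snd z)^0))"
  unfolding tpoly_alt by auto

lemma tpoly_Suc:
  fixes s :: "'d::finite pt \<Rightarrow> real"
  shows "tpoly (Suc m) s \<longleftrightarrow> (\<exists>s' c. tpoly m s' \<and> s = (\<lambda>z. s' z + c * (snd z)^Suc m))"
  unfolding tpoly_alt
proof
  assume "\<exists>c. s = (\<lambda>z::'d pt. \<Sum>k\<le>Suc m. c k * snd z ^ k)"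
  then obtain c where "s = (\<lambda>z::'d pt. \<Sum>k\<le>Suc m. c k * snd z ^ k)" by blast
  then show "\<exists>s' ca. (\<exists>c. s' = (\<lambda>z::'d pt. \<Sum>k\<le>m. c k * snd z ^ k)) \<and> s = (\<lambda>z::'d pt. s' z + ca * snd z ^ Suc m)"
    by (intro exI[of _ "\<lambda>z::'d pt. \<Sum>k\<le>m. c k * snd z ^ k"] exI[of _ "c (Suc m)"]) auto
next
  assume "\<exists>s' ca. (\<exists>c. s' = (\<lambda>z::'d pt. \<Sum>k\<le>m. c k * snd z ^ k)) \<and> s = (\<lambda>z::'d pt. s' z + ca * snd z ^ Suc m)"
  then obtain c d where s: "s = (\<lambda>z::'d pt. (\<Sum>k\<le>m. c k * snd z ^ k) + d * snd z ^ Suc m)" by blast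
  show "\<exists>c. s = (\<lambda>z::'d pt. \<Sum>k\<le>Suc m. c k * snd z ^ k)"
  proof (intro exI[of _ "\<lambda>k. if k = Suc m then d else c k"] ext)
    fix z :: "'d pt"
    have "(\<Sum>k\<le>Suc m. (if k = Suc m then d else c k) * snd z ^ k)
        = (\<Sum>k\<le>m. (if k = Suc m then d else c k) * snd z ^ k) + d * snd z ^ Suc m" by simp
    also have "(\<Sum>k\<le>m. (if k = Suc m then d else c k) * snd z ^ k) = (\<Sum>k\<le>m. c k * snd z ^ k)"
      by (rule sum.cong) auto
    finally show "s z = (\<Sum>k\<le>Suc m. (if k = Suc m then d else c k) * snd z ^ k)" using s by simp
  qed
qed

lemma tproj_exists:
  fixes M :: "'d::finite pt measure"
  assumes tL2: "\<And>m s. tpoly m s \<Longrightarrow> L2M M s"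
    and eL2: "\<And>k. L2M M (\<lambda>z. (snd z)^k)"
  shows "L2M M g \<Longrightarrow> \<exists>r. tpoly m r \<and> (\<forall>s. tpoly m s \<longrightarrow> integral\<^sup>L M (\<lambda>z. (g z - r z) * s z) = 0)"
proof (induction m arbitrary: g)
  case 0
  show ?case
  proof (rule proj_step[where W="\<lambda>s. s = (\<lambda>_. 0)" and e="\<lambda>z. (snd z)^0"])
    show "L2M M s" if "s = (\<lambda>_. 0)" for s using that L2M_cmult[OF eL2[of 0], of 0] by simp
  qed (use 0 eL2[of 0] tpoly_0 in auto)
next
  case (Suc m)
  show ?case
    by (rule proj_step[where W="tpoly m" and e="\<lambda>z. (snd z)^Suc m", OF tL2 tpoly_add tpoly_mul eL2 Suc.IH tpoly_Suc Suc.prems])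
qed



definition C1 :: "('a::real_normed_vector \<Rightarrow> real) \<Rightarrow> bool" where
  "C1 f \<longleftrightarrow> (\<exists>f'. (\<forall>z. (f has_derivative f' z) (at z)) \<and> (\<forall>b. continuous_on UNIV (\<lambda>z. f' z b)))"

lemma C1_cont: "C1 f \<Longrightarrow> continuous_on UNIV f"
  unfolding C1_def continuous_on_eq_continuous_at[OF open_UNIV]
  using has_derivative_continuous by blast

lemma C1_deriv: "C1 f \<Longrightarrow> (f has_derivative frechet_derivative f (at z)) (at z)"
  unfolding C1_def using frechet_derivative_at by metis

lemma C1_deriv_cont: "C1 f \<Longrightarrow> continuous_on UNIV (\<lambda>z. frechet_derivative f (at z) b)"
proof -
  assume "C1 f"
  then obtain f' where f': "\<And>z. (f has_derivative f' z) (at z)" "\<And>b. continuous_on UNIV (\<lambda>z. f' z b)"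
    unfolding C1_def by blast
  have e: "(\<lambda>z. frechet_derivative f (at z) b) = (\<lambda>z. f' z b)"
    using frechet_derivative_at[OF f'(1)] by metis
  show ?thesis unfolding e by (rule f'(2))
qed

lemma C1_const: "C1 (\<lambda>z. c)"
  unfolding C1_def by (rule exI[of _ "\<lambda>z h. 0"]) auto

lemma C1_linear: "bounded_linear L \<Longrightarrow> C1 L"
  unfolding C1_def by (rule exI[of _ "\<lambda>z. L"]) (auto simp: bounded_linear_imp_has_derivative)

lemma C1_add: "C1 f \<Longrightarrow> C1 g \<Longrightarrow> C1 (\<lambda>z. f z + g z)"
  unfolding C1_def
proof (elim exE conjE)
  fix f' g' assume f: "\<forall>z. (f has_derivative f' z) (at z)" "\<forall>b. continuous_on UNIV (\<lambda>z. f' z b)"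
    and g: "\<forall>z. (g has_derivative g' z) (at z)" "\<forall>b. continuous_on UNIV (\<lambda>z. g' z b)"
  show "\<exists>h'. (\<forall>z. ((\<lambda>z. f z + g z) has_derivative h' z) (at z)) \<and> (\<forall>b. continuous_on UNIV (\<lambda>z. h' z b))"
    by (rule exI[of _ "\<lambda>z h. f' z h + g' z h"]) (use f g in \<open>auto intro!: has_derivative_add continuous_intros\<close>)
qed

lemma C1_mult: "C1 f \<Longrightarrow> C1 g \<Longrightarrow> C1 (\<lambda>z. f z * g z)"
proof -
  assume Cf: "C1 f" and Cg: "C1 g"
  have cf: "continuous_on UNIV f" and cg: "continuous_on UNIV g" using C1_cont Cf Cg by auto
  from Cf Cg show ?thesis
    unfolding C1_def
  proof (elim exE conjE)
    fix f' g' assume f: "\<forall>z. (f has_derivative f' z) (at z)" "\<forall>b. continuous_on UNIV (\<lambda>z. f' z b)"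
      and g: "\<forall>z. (g has_derivative g' z) (at z)" "\<forall>b. continuous_on UNIV (\<lambda>z. g' z b)"
    show "\<exists>h'. (\<forall>z. ((\<lambda>z. f z * g z) has_derivative h' z) (at z)) \<and> (\<forall>b. continuous_on UNIV (\<lambda>z. h' z b))"
      by (rule exI[of _ "\<lambda>z h. f z * g' z h + f' z h * g z"])
         (use f g cf cg in \<open>auto intro!: has_derivative_mult continuous_intros\<close>)
  qed
qed

lemma C1_sum: "(\<And>a. a \<in> A \<Longrightarrow> C1 (f a)) \<Longrightarrow> C1 (\<lambda>z. \<Sum>a\<in>A. f a z)"
proof (induction A rule: infinite_finite_induct)
  case (infinite A) then show ?case by (simp add: C1_const)
next
  case empty then show ?case by (simp add: C1_const)
next
  case (insert x F) then show ?case by (simp add: C1_add)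
qed

lemma C1_prod: "(\<And>a. a \<in> A \<Longrightarrow> C1 (f a)) \<Longrightarrow> C1 (\<lambda>z. \<Prod>a\<in>A. f a z)"
proof (induction A rule: infinite_finite_induct)
  case (infinite A) then show ?case by (simp add: C1_const)
next
  case empty then show ?case by (simp add: C1_const)
next
  case (insert x F) then show ?case by (simp add: C1_mult)
qed

lemma C1_power: "C1 f \<Longrightarrow> C1 (\<lambda>z. (f z)^n)"
  by (induction n) (auto simp: C1_const C1_mult)

lemma ppoly_C1: "ppoly p (q :: 'd::finite pt \<Rightarrow> real) \<Longrightarrow> C1 q"
proof -
  assume "ppoly p q"
  then obtain c where q: "q = (\<lambda>(x,t). \<Sum>\<alpha>\<in>{\<alpha>. sum (fst \<alpha>) UNIV + snd \<alpha> \<le> p}.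
              c \<alpha> * (\<Prod>i\<in>UNIV. (x$i) ^ (fst \<alpha> i)) * t ^ (snd \<alpha>))"
    unfolding ppoly_def by blast
  have q': "q = (\<lambda>z. \<Sum>\<alpha>\<in>{\<alpha>. sum (fst \<alpha>) UNIV + snd \<alpha> \<le> p}.
              c \<alpha> * (\<Prod>i\<in>UNIV. ((fst z)$i) ^ (fst \<alpha> i)) * (snd z) ^ (snd \<alpha>))"
    unfolding q by (simp add: split_beta')
  have lx: "\<And>i. C1 (\<lambda>z::'d pt. (fst z)$i)"
    by (rule C1_linear, rule bounded_linear_compose[OF bounded_linear_vec_nth bounded_linear_fst])
  have lt: "C1 (\<lambda>z::'d pt. snd z)" by (rule C1_linear[OF bounded_linear_snd])
  show ?thesis unfolding q'
    by (intro C1_sum C1_mult C1_const C1_prod C1_power lx lt)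
qed

lemma tpoly_cont: "tpoly m (s :: 'd::finite pt \<Rightarrow> real) \<Longrightarrow> continuous_on UNIV s"
  unfolding tpoly_alt by (auto intro!: continuous_intros)



lemma cont_meas: "continuous_on UNIV f \<Longrightarrow> f \<in> borel_measurable lborel"
  using borel_measurable_continuous_onI by simp

lemma deriv_zero_outside:
  fixes f :: "'a::real_normed_vector \<Rightarrow> real"
  assumes "(f has_derivative f') (at z)" "closed C" "z \<notin> C" "\<And>y. y \<notin> C \<Longrightarrow> f y = 0"
  shows "f' = (\<lambda>h. 0)"
proof -
  have "((\<lambda>y. 0::real) has_derivative f') (at z)"
    by (rule has_derivative_transform_within_open[OF assms(1), of "-C"]) (use assms in auto)
  moreover have "((\<lambda>y. 0::real) has_derivative (\<lambda>h. 0)) (at z)" by simp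
  ultimately show ?thesis using has_derivative_unique by blast
qed

lemma line_deriv:
  fixes F :: "'a::real_normed_vector \<Rightarrow> real"
  assumes der: "\<And>z. (F has_derivative F' z) (at z)"
  shows "((\<lambda>s. F (z + s *\<^sub>R b)) has_real_derivative F' (z + s *\<^sub>R b) b) (at s)"
proof -
  have "((\<lambda>s. z + s *\<^sub>R b) has_derivative (\<lambda>s'. s' *\<^sub>R b)) (at s)"
    by (auto intro!: derivative_eq_intros)
  from has_derivative_compose[OF this der]
  have d: "((\<lambda>s. F (z + s *\<^sub>R b)) has_derivative (\<lambda>s'. F' (z + s *\<^sub>R b) (s' *\<^sub>R b))) (at s)" .
  have lin: "linear (F' (z + s *\<^sub>R b))" using der has_derivative_linear by blast
  show ?thesis
    by (rule has_derivative_imp_has_field_derivative[OF d]) (simp add: linear_cmul[OF lin])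
qed

lemma int_deriv_zero:
  fixes F :: "'a::euclidean_space \<Rightarrow> real" and F' :: "'a \<Rightarrow> 'a \<Rightarrow> real"
  assumes der: "\<And>z. (F has_derivative F' z) (at z)"
    and cont: "continuous_on UNIV (\<lambda>z. F' z b)"
    and C: "compact C" and out: "\<And>z. z \<notin> C \<Longrightarrow> F z = 0"
  shows "integral\<^sup>L lborel (\<lambda>z. F' z b) = 0"
proof -
  define G where "G z = F' z b" for z
  have Gout: "G z = 0" if "z \<notin> C" for z
    using deriv_zero_outside[OF der compact_imp_closed[OF C] that out] unfolding G_def by simp
  have Gc: "continuous_on UNIV G" unfolding G_def by (rule cont)
  have Fc: "continuous_on UNIV F"
    using der has_derivative_continuous continuous_on_eq_continuous_at[OF open_UNIV] by blast
  obtain B where B: "\<And>z. \<bar>G z\<bar> \<le> B"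
  proof -
    have "compact (G ` C)" using compact_continuous_image[OF continuous_on_subset[OF Gc] C] by simp
    then obtain B0 where B0: "\<forall>y\<in>G`C. norm y \<le> B0" using compact_imp_bounded bounded_iff by metis
    have "\<bar>G z\<bar> \<le> max B0 0" for z using B0 by (cases "z\<in>C") (auto simp: Gout)
    then show thesis using that by blast
  qed
  obtain R where R: "\<And>z. z \<in> C \<Longrightarrow> norm z \<le> R" using compact_imp_bounded[OF C] bounded_iff by metis
  define C' where "C' = cball (0::'a) (R + norm b)"
  define h where "h n = 1 / real (Suc n)" for n
  define D where "D n z = (F (z + h n *\<^sub>R b) - F z) / h n" for n z
  have hpos: "0 < h n" "h n \<le> 1" for n unfolding h_def by auto
  have Fm: "F \<in> borel_measurable lborel" by (rule cont_meas[OF Fc])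
  have Fint: "integrable lborel F"
  proof -
    have "integrable lborel (\<lambda>x. indicator C x *\<^sub>R F x)"
      by (rule borel_integrable_compact[OF C continuous_on_subset[OF Fc]]) auto
    moreover have "(\<lambda>x. indicator C x *\<^sub>R F x) = F"
    proof
      fix x show "indicator C x *\<^sub>R F x = F x" using out[of x] by (cases "x \<in> C") auto
    qed
    ultimately show ?thesis by simp
  qed
  have shift: "integrable lborel (\<lambda>z. F (c + z)) \<and> integral\<^sup>L lborel (\<lambda>z. F (c + z)) = integral\<^sup>L lborel F" for c :: 'a
  proof -
    have m: "(+) c \<in> measurable lborel borel" by simp
    have "integral\<^sup>L (distr lborel borel ((+) c)) F = integral\<^sup>L lborel (\<lambda>z. F (c + z))"
      by (rule integral_distr[OF m]) (use Fm in simp)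
    moreover have "integrable (distr lborel borel ((+) c)) F \<longleftrightarrow> integrable lborel (\<lambda>z. F (c + z))"
      by (rule integrable_distr_eq[OF m]) (use Fm in simp)
    ultimately show ?thesis using Fint unfolding lborel_distr_plus by simp
  qed
  have D0: "integral\<^sup>L lborel (D n) = 0" for n
  proof -
    have "integral\<^sup>L lborel (\<lambda>z. F (z + h n *\<^sub>R b) - F z) = 0"
      using shift[of "h n *\<^sub>R b"] Fint by (simp add: add.commute)
    then show ?thesis unfolding D_def by simp
  qed
  have lim: "(\<lambda>n. D n z) \<longlonglongrightarrow> G z" for z
  proof -
    have "((\<lambda>s. F (z + s *\<^sub>R b)) has_real_derivative G z) (at 0)"
      using line_deriv[OF der, of z b 0] unfolding G_def by simp
    then have l1: "((\<lambda>y. (F (z + y *\<^sub>R b) - F z) / y) \<longlongrightarrow> G z) (at 0)"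
      unfolding has_field_derivative_iff by simp
    have l2: "filterlim h (at 0) sequentially"
      unfolding filterlim_at
    proof
      show "\<forall>\<^sub>F n in sequentially. h n \<in> UNIV \<and> h n \<noteq> 0" using hpos by (auto intro!: always_eventually) (metis less_irrefl)
      show "h \<longlonglongrightarrow> 0" unfolding h_def using LIMSEQ_inverse_real_of_nat by (simp add: inverse_eq_divide)
    qed
    show ?thesis using filterlim_compose[OF l1 l2] unfolding D_def by simp
  qed
  have bound: "\<bar>D n z\<bar> \<le> B * indicator C' z" for n z
  proof (cases "z \<in> C'")
    case True
    have "\<exists>\<xi>. 0 < \<xi> \<and> \<xi> < h n \<and> F (z + h n *\<^sub>R b) - F (z + 0 *\<^sub>R b) = (h n - 0) * G (z + \<xi> *\<^sub>R b)"
      by (rule MVT2[OF hpos(1)[of n], where f="\<lambda>s. F (z + s *\<^sub>R b)"]) (use line_deriv[OF der] in \<open>auto simp: G_def\<close>)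
    then obtain \<xi> where "F (z + h n *\<^sub>R b) - F z = h n * G (z + \<xi> *\<^sub>R b)" by auto
    then have "D n z = G (z + \<xi> *\<^sub>R b)" unfolding D_def using hpos(1)[of n] by simp
    then show ?thesis using True B by simp
  next
    case False
    then have nz: "norm z > R + norm b" unfolding C'_def by auto
    have "z \<notin> C" using R nz by (smt (verit) norm_ge_zero)
    moreover have "z + h n *\<^sub>R b \<notin> C"
    proof
      assume "z + h n *\<^sub>R b \<in> C"
      then have "norm (z + h n *\<^sub>R b) \<le> R" by (rule R)
      moreover have "norm (h n *\<^sub>R b) \<le> norm b" using hpos[of n] by (simp add: mult_left_le_one_le)
      moreover have "norm z \<le> norm (z + h n *\<^sub>R b) + norm (h n *\<^sub>R b)"
        by (metis add_diff_cancel norm_triangle_ineq4)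
      ultimately show False using nz by linarith
    qed
    ultimately show ?thesis unfolding D_def using out False by simp
  qed
  have Dm: "D n \<in> borel_measurable lborel" for n
    unfolding D_def by (intro cont_meas continuous_intros continuous_on_compose2[OF Fc]) (use hpos(1)[of n] in auto)
  have wint: "integrable lborel (\<lambda>z. B * indicator C' z)"
    unfolding C'_def by (intro integrable_mult_right integrable_real_indicator emeasure_bounded_finite) auto
  have "(\<lambda>n. integral\<^sup>L lborel (D n)) \<longlonglongrightarrow> integral\<^sup>L lborel G"
    by (rule integral_dominated_convergence[where w="\<lambda>z. B * indicator C' z"])
       (use cont_meas[OF Gc] Dm wint lim bound in auto)
  then have "integral\<^sup>L lborel G = 0" using D0 by (simp add: LIMSEQ_const_iff)
  then show ?thesis unfolding G_def .
qed



lemma cont_compact_integrable: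
  fixes f :: "'a::euclidean_space \<Rightarrow> real"
  assumes "continuous_on UNIV f" "compact C" "\<And>z. z \<notin> C \<Longrightarrow> f z = 0"
  shows "integrable lborel f"
proof -
  have "integrable lborel (\<lambda>x. indicator C x *\<^sub>R f x)"
    by (rule borel_integrable_compact[OF assms(2) continuous_on_subset[OF assms(1)]]) auto
  moreover have "(\<lambda>x. indicator C x *\<^sub>R f x) = f"
  proof
    fix x show "indicator C x *\<^sub>R f x = f x" using assms(3)[of x] by (cases "x \<in> C") auto
  qed
  ultimately show ?thesis by simp
qed

lemma set_integral_supp:
  fixes f :: "'a::euclidean_space \<Rightarrow> real"
  assumes "\<And>z. z \<notin> K \<Longrightarrow> f z = 0"
  shows "(LINT z:K|lborel. f z) = integral\<^sup>L lborel f"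
proof -
  have "(\<lambda>x. indicator K x *\<^sub>R f x) = f"
  proof
    fix x show "indicator K x *\<^sub>R f x = f x" using assms[of x] by (cases "x \<in> K") auto
  qed
  then show ?thesis unfolding set_lebesgue_integral_def by simp
qed

lemma smooth_der:
  assumes "smooth \<phi>" "b \<in> Basis"
  shows "\<And>z. (\<phi> has_derivative frechet_derivative \<phi> (at z)) (at z)"
    and "continuous_on UNIV (\<lambda>z. frechet_derivative \<phi> (at z) b)"
proof -
  have c1: "cdiff (Suc 0) \<phi>" using assms(1) unfolding smooth_def by blast
  then have "\<phi> differentiable_on UNIV" by simp
  then show "\<And>z. (\<phi> has_derivative frechet_derivative \<phi> (at z)) (at z)"
    using frechet_derivative_works differentiable_on_def by (metis UNIV_I)
  show "continuous_on UNIV (\<lambda>z. frechet_derivative \<phi> (at z) b)" using c1 assms(2) by simp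
qed

lemma ibp:
  fixes q \<phi> :: "'a::euclidean_space \<Rightarrow> real"
  assumes q: "C1 q" and phi: "smooth \<phi>" "compact (tsupport \<phi>)" "tsupport \<phi> \<subseteq> K" and b: "b \<in> Basis"
  shows "(LINT z:K|lborel. q z * frechet_derivative \<phi> (at z) b)
       = - (LINT z:K|lborel. frechet_derivative q (at z) b * \<phi> z)"
proof -
  define C where "C = tsupport \<phi>"
  have C: "compact C" using phi unfolding C_def by simp
  have sub: "{y. \<phi> y \<noteq> 0} \<subseteq> C" unfolding C_def tsupport_def by (rule closure_subset)
  have phi0: "\<phi> z = 0" if "z \<notin> C" for z
    using that sub by blast
  have pd: "\<And>z. (\<phi> has_derivative frechet_derivative \<phi> (at z)) (at z)"
    and pdc: "continuous_on UNIV (\<lambda>z. frechet_derivative \<phi> (at z) b)"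
    using smooth_der[OF phi(1) b] by auto
  have pc: "continuous_on UNIV \<phi>"
    using pd has_derivative_continuous continuous_on_eq_continuous_at[OF open_UNIV] by blast
  have pd0: "frechet_derivative \<phi> (at z) = (\<lambda>h. 0)" if "z \<notin> C" for z
    by (rule deriv_zero_outside[OF pd compact_imp_closed[OF C] that phi0])
  have qd: "\<And>z. (q has_derivative frechet_derivative q (at z)) (at z)" using C1_deriv[OF q] .
  have qdc: "continuous_on UNIV (\<lambda>z. frechet_derivative q (at z) b)" using C1_deriv_cont[OF q] .
  have qc: "continuous_on UNIV q" using C1_cont[OF q] .
  define f1 where "f1 z = q z * frechet_derivative \<phi> (at z) b" for z
  define f2 where "f2 z = frechet_derivative q (at z) b * \<phi> z" for z
  have f1c: "continuous_on UNIV f1" unfolding f1_def by (intro continuous_intros qc pdc)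
  have f2c: "continuous_on UNIV f2" unfolding f2_def by (intro continuous_intros qdc pc)
  have f10: "f1 z = 0" if "z \<notin> C" for z unfolding f1_def using pd0[OF that] by simp
  have f20: "f2 z = 0" if "z \<notin> C" for z unfolding f2_def using phi0[OF that] by simp
  have i1: "integrable lborel f1" by (rule cont_compact_integrable[OF f1c C f10])
  have i2: "integrable lborel f2" by (rule cont_compact_integrable[OF f2c C f20])
  have "integral\<^sup>L lborel (\<lambda>z. (\<lambda>h. q z * frechet_derivative \<phi> (at z) h + frechet_derivative q (at z) h * \<phi> z) b) = 0"
  proof (rule int_deriv_zero[where F="\<lambda>z. q z * \<phi> z" and C=C])
    show "((\<lambda>z. q z * \<phi> z) has_derivative (\<lambda>h. q z * frechet_derivative \<phi> (at z) h + frechet_derivative q (at z) h * \<phi> z)) (at z)" for z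
      by (rule has_derivative_mult[OF qd pd])
    show "continuous_on UNIV (\<lambda>z. q z * frechet_derivative \<phi> (at z) b + frechet_derivative q (at z) b * \<phi> z)"
      by (intro continuous_intros qc pdc qdc pc)
    show "compact C" by (rule C)
    show "q z * \<phi> z = 0" if "z \<notin> C" for z using phi0[OF that] by simp
  qed
  then have "integral\<^sup>L lborel (\<lambda>z. f1 z + f2 z) = 0" unfolding f1_def f2_def by simp
  then have "integral\<^sup>L lborel f1 = - integral\<^sup>L lborel f2" using i1 i2 by simp
  moreover have "(LINT z:K|lborel. f1 z) = integral\<^sup>L lborel f1"
    by (rule set_integral_supp) (use f10 phi(3) C_def in auto)
  moreover have "(LINT z:K|lborel. f2 z) = integral\<^sup>L lborel f2"
    by (rule set_integral_supp) (use f20 phi(3) C_def in auto)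
  ultimately show ?thesis unfolding f1_def f2_def by simp
qed



lemma bridge_int:
  fixes f :: "'a::euclidean_space \<Rightarrow> real"
  shows "K \<in> sets lborel \<Longrightarrow> (LINT z:K|lborel. f z) = integral\<^sup>L (restrict_space lborel K) f"
  unfolding set_lebesgue_integral_def using integral_restrict_space[of K lborel f] by simp

lemma bridge_nsq: "K \<in> sets lborel \<Longrightarrow> nsq K f = integral\<^sup>L (restrict_space lborel K) (\<lambda>z. (f z)^2)"
  unfolding nsq_def by (rule bridge_int)

lemma bridge_L2: "K \<in> sets lborel \<Longrightarrow> L2 K f \<longleftrightarrow> L2M (restrict_space lborel K) f"
  unfolding L2_def L2M_def set_borel_measurable_def
  by (subst borel_measurable_restrict_space_iff, simp, subst set_integrable_eq, auto)

lemma fin_restrict: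
  fixes K :: "'a::euclidean_space set"
  assumes "bounded K" "K \<in> sets lborel"
  shows "finite_measure (restrict_space lborel K)"
  by (rule finite_measureI) (use assms emeasure_bounded_finite[OF assms(1)] in \<open>auto simp: space_restrict_space emeasure_restrict_space\<close>)

lemma cont_L2M:
  fixes K :: "'a::euclidean_space set"
  assumes K: "bounded K" "K \<in> sets lborel" and f: "continuous_on UNIV f"
  shows "L2M (restrict_space lborel K) f"
proof -
  have "compact (f ` closure K)"
    by (rule compact_continuous_image[OF continuous_on_subset[OF f]]) (use K in \<open>auto simp: compact_closure\<close>)
  then obtain B where B: "\<forall>y\<in>f ` closure K. norm y \<le> B" using compact_imp_bounded bounded_iff by metis
  show ?thesis
  proof (rule L2M_bounded[OF fin_restrict[OF K]])
  show "f \<in> borel_measurable (restrict_space lborel K)"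
    by (rule measurable_restrict_space1) (rule cont_meas[OF f])
  show "\<bar>f z\<bar> \<le> B" if "z \<in> space (restrict_space lborel K)" for z
    using that B closure_subset by (auto simp: space_restrict_space)
  qed
qed

lemma L2M_integrable:
  assumes "finite_measure M" "L2M M f" shows "integrable M f"
proof -
  have "L2M M (\<lambda>_. 1)" by (rule L2M_bounded[OF assms(1), of _ 1]) auto
  from L2M_prod[OF assms(2) this] show ?thesis by simp
qed

lemma polytopal_facts:
  assumes "polytopal Kx"
  shows "open Kx" "bounded Kx" "Kx \<noteq> {}" "diameter Kx > 0"
proof -
  obtain P where P: "finite P" "\<forall>Q\<in>P. polytope Q" "Kx = interior (\<Union>P)" and ne: "Kx \<noteq> {}"
    using assms unfolding polytopal_def by blast
  show o: "open Kx" using P(3) by simp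
  have "compact (\<Union>P)" using P(1,2) polytope_imp_compact by (intro compact_Union) auto
  then show b: "bounded Kx" using P(3) interior_subset compact_imp_bounded bounded_subset by metis
  show "Kx \<noteq> {}" by (rule ne)
  obtain x where x: "x \<in> Kx" using ne by blast
  obtain e where e: "e > 0" "ball x e \<subseteq> Kx" using o x open_contains_ball by blast
  have "diameter (ball x e) \<le> diameter Kx" by (rule diameter_subset[OF e(2) b])
  then show "diameter Kx > 0" using e(1) by simp
qed

lemma weak_deriv_diff:
  fixes K :: "'a::euclidean_space set"
  assumes K: "K \<in> sets lborel" "bounded K"
    and v: "L2M (restrict_space lborel K) v" and g: "L2M (restrict_space lborel K) g"
    and wd: "weak_deriv K v b g" and q: "C1 q" and b: "b \<in> Basis"
  shows "weak_deriv K (\<lambda>z. v z - q z) b (\<lambda>z. g z - frechet_derivative q (at z) b)"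
  unfolding weak_deriv_def
proof (intro allI impI)
  fix \<phi> assume tf: "test_fun K \<phi>"
  define M where "M = restrict_space lborel K"
  have phi: "smooth \<phi>" "compact (tsupport \<phi>)" "tsupport \<phi> \<subseteq> K" using tf unfolding test_fun_def by auto
  have pd: "\<And>z. (\<phi> has_derivative frechet_derivative \<phi> (at z)) (at z)"
    and pdc: "continuous_on UNIV (\<lambda>z. frechet_derivative \<phi> (at z) b)"
    using smooth_der[OF phi(1) b] by auto
  have pc: "continuous_on UNIV \<phi>"
    using pd has_derivative_continuous continuous_on_eq_continuous_at[OF open_UNIV] by blast
  have L: "L2M M \<phi>" "L2M M (\<lambda>z. frechet_derivative \<phi> (at z) b)" "L2M M q"
      "L2M M (\<lambda>z. frechet_derivative q (at z) b)"
    unfolding M_def using cont_L2M[OF K(2,1)] pc pdc C1_cont[OF q] C1_deriv_cont[OF q] by auto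
  have vM: "L2M M v" "L2M M g" using v g unfolding M_def by auto
  have e1: "(LINT z:K|lborel. v z * frechet_derivative \<phi> (at z) b) = - (LINT z:K|lborel. g z * \<phi> z)"
    using wd tf unfolding weak_deriv_def by blast
  have e2: "(LINT z:K|lborel. q z * frechet_derivative \<phi> (at z) b) = - (LINT z:K|lborel. frechet_derivative q (at z) b * \<phi> z)"
    by (rule ibp[OF q phi b])
  have "(LINT z:K|lborel. (v z - q z) * frechet_derivative \<phi> (at z) b)
      = integral\<^sup>L M (\<lambda>z. v z * frechet_derivative \<phi> (at z) b - q z * frechet_derivative \<phi> (at z) b)"
    unfolding bridge_int[OF K(1)] M_def by (simp add: algebra_simps)
  also have "\<dots> = integral\<^sup>L M (\<lambda>z. v z * frechet_derivative \<phi> (at z) b) - integral\<^sup>L M (\<lambda>z. q z * frechet_derivative \<phi> (at z) b)"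
    by (rule Bochner_Integration.integral_diff; rule L2M_prod) (use L vM in auto)
  also have "\<dots> = - integral\<^sup>L M (\<lambda>z. g z * \<phi> z) + integral\<^sup>L M (\<lambda>z. frechet_derivative q (at z) b * \<phi> z)"
    using e1 e2 unfolding bridge_int[OF K(1)] M_def by simp
  also have "\<dots> = - integral\<^sup>L M (\<lambda>z. g z * \<phi> z - frechet_derivative q (at z) b * \<phi> z)"
    by (subst Bochner_Integration.integral_diff; (rule L2M_prod)?) (use L vM in auto)
  also have "\<dots> = - (LINT z:K|lborel. (g z - frechet_derivative q (at z) b) * \<phi> z)"
    unfolding bridge_int[OF K(1)] M_def by (simp add: algebra_simps)
  finally show "(LINT z:K|lborel. (v z - q z) * frechet_derivative \<phi> (at z) b) = - (LINT z:K|lborel. (g z - frechet_derivative q (at z) b) * \<phi> z)" .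
qed



lemma int_lin3:
  fixes f1 f2 f3 :: "'a \<Rightarrow> real"
  assumes "integrable M f1" "integrable M f2" "integrable M f3"
  shows "integral\<^sup>L M (\<lambda>z. f1 z + a * f2 z + b * f3 z)
       = integral\<^sup>L M f1 + a * integral\<^sup>L M f2 + b * integral\<^sup>L M f3"
  using assms by simp

lemma sq_diff_expand:
  assumes g: "L2M M g" and d: "L2M M d"
  shows "integral\<^sup>L M (\<lambda>z. (g z - d z)^2) = integral\<^sup>L M (\<lambda>z. (g z)^2) - integral\<^sup>L M (\<lambda>z. (d z)^2)
           + 2 * integral\<^sup>L M (\<lambda>z. d z * (d z - g z))"
proof -
  have i: "integrable M (\<lambda>z. (g z)^2)" "integrable M (\<lambda>z. (d z)^2)" "integrable M (\<lambda>z. d z * (d z - g z))"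
    using g d L2M_prod[OF d L2M_diff[OF d g]] unfolding L2M_def by auto
  have "integral\<^sup>L M (\<lambda>z. (g z - d z)^2) = integral\<^sup>L M (\<lambda>z. (g z)^2 + (-1) * (d z)^2 + 2 * (d z * (d z - g z)))"
    by (rule Bochner_Integration.integral_cong) (auto simp: power2_eq_square algebra_simps)
  also have "\<dots> = integral\<^sup>L M (\<lambda>z. (g z)^2) + (-1) * integral\<^sup>L M (\<lambda>z. (d z)^2) + 2 * integral\<^sup>L M (\<lambda>z. d z * (d z - g z))"
    by (rule int_lin3[OF i])
  finally show ?thesis by simp
qed

lemma sq_diff_le:
  assumes a: "L2M M a" and b: "L2M M b"
  shows "integral\<^sup>L M (\<lambda>z. (a z - b z)^2) \<le> 2 * integral\<^sup>L M (\<lambda>z. (a z)^2) + 2 * integral\<^sup>L M (\<lambda>z. (b z)^2)"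
proof -
  have i: "integrable M (\<lambda>z. (a z)^2)" "integrable M (\<lambda>z. (b z)^2)" "integrable M (\<lambda>z. (a z - b z)^2)"
    using a b L2M_diff[OF a b] unfolding L2M_def by auto
  have "integral\<^sup>L M (\<lambda>z. (a z - b z)^2) \<le> integral\<^sup>L M (\<lambda>z. 2 * (a z)^2 + 2 * (b z)^2)"
  proof (rule integral_mono)
    show "integrable M (\<lambda>z. 2 * (a z)^2 + 2 * (b z)^2)" using i by auto
    show "(a z - b z)^2 \<le> 2 * (a z)^2 + 2 * (b z)^2" for z
    proof -
      have "(a z - b z)^2 + (a z + b z)^2 = 2 * (a z)^2 + 2 * (b z)^2" by (simp add: power2_eq_square algebra_simps)
      moreover have "0 \<le> (a z + b z)^2" by simp
      ultimately show ?thesis by linarith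
    qed
  qed (use i in auto)
  also have "\<dots> = 2 * integral\<^sup>L M (\<lambda>z. (a z)^2) + 2 * integral\<^sup>L M (\<lambda>z. (b z)^2)"
    using i by simp
  finally show ?thesis .
qed

lemma proj_le:
  assumes r: "L2M M r" and v: "L2M M v"
    and e: "integral\<^sup>L M (\<lambda>z. r z * r z) = integral\<^sup>L M (\<lambda>z. r z * v z)"
  shows "integral\<^sup>L M (\<lambda>z. (r z)^2) \<le> integral\<^sup>L M (\<lambda>z. (v z)^2)"
proof -
  have i: "integrable M (\<lambda>z. (r z)^2)" "integrable M (\<lambda>z. (v z)^2)" "integrable M (\<lambda>z. r z * v z)"
    using r v L2M_prod[OF r v] unfolding L2M_def by auto
  have "integral\<^sup>L M (\<lambda>z. r z * v z) \<le> integral\<^sup>L M (\<lambda>z. (1/2) * (r z)^2 + (1/2) * (v z)^2)"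
  proof (rule integral_mono)
    show "integrable M (\<lambda>z. (1/2) * (r z)^2 + (1/2) * (v z)^2)" using i by auto
    show "r z * v z \<le> (1/2) * (r z)^2 + (1/2) * (v z)^2" for z
    proof -
      have "(r z - v z)^2 = (r z)^2 + (v z)^2 - 2 * (r z * v z)" by (simp add: power2_eq_square algebra_simps)
      moreover have "0 \<le> (r z - v z)^2" by simp
      ultimately show ?thesis by linarith
    qed
  qed (use i in auto)
  also have "\<dots> = (1/2) * integral\<^sup>L M (\<lambda>z. (r z)^2) + (1/2) * integral\<^sup>L M (\<lambda>z. (v z)^2)"
    using i by simp
  finally have "integral\<^sup>L M (\<lambda>z. r z * v z) \<le> (1/2) * integral\<^sup>L M (\<lambda>z. (r z)^2) + (1/2) * integral\<^sup>L M (\<lambda>z. (v z)^2)" .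
  moreover have "integral\<^sup>L M (\<lambda>z. (r z)^2) = integral\<^sup>L M (\<lambda>z. r z * v z)"
    using e by (simp add: power2_eq_square)
  ultimately show ?thesis by linarith
qed

lemma mean_sq_le:
  fixes Kx :: "(real^'d::finite) set" and g tr :: "real^'d \<Rightarrow> real"
  assumes Kb: "bounded Kx" and Ks: "Kx \<in> sets lborel" and tr: "L2 Kx tr" and g: "continuous_on UNIV g"
    and e: "(LINT x:Kx|lborel. g x - tr x) = 0"
  shows "measure lborel Kx * (mean Kx g)^2 \<le> nsq Kx tr"
proof -
  define M where "M = restrict_space lborel Kx"
  have fin: "finite_measure M" unfolding M_def by (rule fin_restrict[OF Kb Ks])
  have trM: "L2M M tr" using tr bridge_L2[OF Ks] unfolding M_def by simp
  have gM: "L2M M g" unfolding M_def by (rule cont_L2M[OF Kb Ks g])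
  have it: "integrable M tr" "integrable M g" using L2M_integrable[OF fin] trM gM by auto
  have it2: "integrable M (\<lambda>z. (tr z)^2)" using trM unfolding L2M_def by auto
  have "integral\<^sup>L M (\<lambda>x. g x - tr x) = 0" using e unfolding bridge_int[OF Ks] M_def .
  then have ig: "integral\<^sup>L M g = integral\<^sup>L M tr" using it by simp
  define \<mu> where "\<mu> = measure lborel Kx"
  have sp: "space M = Kx" unfolding M_def by (simp add: space_restrict_space)
  have mu: "measure M (space M) = \<mu>" unfolding sp M_def \<mu>_def using Ks by (simp add: measure_restrict_space)
  have nsq: "nsq Kx tr = integral\<^sup>L M (\<lambda>z. (tr z)^2)" unfolding bridge_nsq[OF Ks] M_def ..
  have mean: "mean Kx g = integral\<^sup>L M tr / \<mu>"
    unfolding mean_def bridge_int[OF Ks] \<mu>_def[symmetric] using ig unfolding M_def by simp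
  show ?thesis
  proof (cases "\<mu> = 0")
    case True
    then show ?thesis unfolding mean nsq \<mu>_def[symmetric] by (simp add: nsq_nonneg)
  next
    case False
    define m where "m = integral\<^sup>L M tr / \<mu>"
    have "0 \<le> integral\<^sup>L M (\<lambda>z. (tr z - m)^2)" by (rule nsq_nonneg)
    also have "integral\<^sup>L M (\<lambda>z. (tr z - m)^2) = integral\<^sup>L M (\<lambda>z. (tr z)^2 + (-2 * m) * tr z + m^2 * 1)"
      by (rule Bochner_Integration.integral_cong) (auto simp: power2_eq_square algebra_simps)
    also have "\<dots> = integral\<^sup>L M (\<lambda>z. (tr z)^2) + (-2 * m) * integral\<^sup>L M tr + m^2 * integral\<^sup>L M (\<lambda>z. 1)"
      by (rule int_lin3) (use it it2 finite_measure.integrable_const[OF fin] in auto)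
    also have "integral\<^sup>L M (\<lambda>z. 1::real) = \<mu>" using mu by simp
    also have "integral\<^sup>L M tr = m * \<mu>" unfolding m_def using False by simp
    finally have "m^2 * \<mu> \<le> integral\<^sup>L M (\<lambda>z. (tr z)^2)" by (simp add: power2_eq_square algebra_simps)
    then show ?thesis unfolding nsq mean m_def[symmetric] \<mu>_def[symmetric] by (simp add: mult.commute)
  qed
qed

lemma final_arith:
  fixes \<nu> c ctr cPi h ht V Gx T Q G Dq Rr Mn Tr Wn WG WT Sw :: real
  assumes nu: "\<nu> > 0" and ctr: "ctr > 0" and cPi: "cPi > 0" and h: "h > 0"
    and nn: "V \<ge> 0" "T \<ge> 0" "G \<ge> 0" "Wn \<ge> 0" "WG \<ge> 0" "WT \<ge> 0"
    and WG: "WG \<le> Gx" and GG: "G \<le> Gx" and Wn: "Wn \<le> 2*V + 2*Q" and WT: "WT \<le> 2*T + 2*Dq"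
    and Rr: "Rr \<le> V" and Mn: "Mn \<le> ctr * (V + ht^2 * T)"
    and cP: "Q + h^2 * G + ht^2 * Dq \<le> cPi * (h^2 * G + Rr + Mn)"
    and Sw: "Sw \<le> c * (Wn / h^2 + WG + ht^2 / h^2 * WT)"
  shows "\<nu> * G + \<nu> * Sw \<le> 3 * max 1 c * \<nu> * (1 + (1 + ctr) * cPi) * (V / h^2 + Gx + ht^2 / h^2 * T)"
proof -
  define R where "R = V / h^2 + Gx + ht^2 / h^2 * T"
  define A where "A = 1 + (1 + ctr) * cPi"
  define m where "m = max 1 c"
  have h2: "h^2 > 0" using h by simp
  have R_eq: "h^2 * R = V + h^2 * Gx + ht^2 * T" unfolding R_def using h2 by (simp add: field_simps)
  have GxR: "Gx \<le> R" unfolding R_def using nn h2 by (simp add: field_simps)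
  have R0: "R \<ge> 0" using GxR GG nn by linarith
  have a1: "Q + ht^2 * Dq \<le> cPi * (h^2 * Gx + V + ctr * (V + ht^2 * T))"
  proof -
    have "cPi * (h^2 * G + Rr + Mn) \<le> cPi * (h^2 * Gx + V + ctr * (V + ht^2 * T))"
    proof (rule mult_left_mono)
      have "h^2 * G \<le> h^2 * Gx" using GG h2 by (intro mult_left_mono) auto
      then show "h^2 * G + Rr + Mn \<le> h^2 * Gx + V + ctr * (V + ht^2 * T)" using Rr Mn by linarith
    qed (use cPi in auto)
    moreover have "h^2 * G \<ge> 0" using nn h2 by simp
    ultimately show ?thesis using cP by linarith
  qed
  have a2: "h^2 * Gx + V + ctr * (V + ht^2 * T) \<le> (1 + ctr) * (h^2 * R)"
  proof -
    have "Gx \<ge> 0" using GG nn by linarith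
    then have "0 \<le> ctr * (h^2 * Gx)" "0 \<le> ht^2 * T" using ctr h2 nn by auto
    then have "0 \<le> ctr * (ht^2 * T)" using ctr by simp
    have "(1 + ctr) * (h^2 * R) = h^2 * Gx + V + ctr * (V + ht^2 * T) + ctr * (h^2 * Gx) + ht^2 * T"
      unfolding R_eq by (simp add: algebra_simps)
    then show ?thesis using \<open>0 \<le> ctr * (h^2 * Gx)\<close> \<open>0 \<le> ht^2 * T\<close> by linarith
  qed
  have a: "Q + ht^2 * Dq \<le> cPi * (1 + ctr) * (h^2 * R)"
  proof -
    have "cPi * (h^2 * Gx + V + ctr * (V + ht^2 * T)) \<le> cPi * ((1 + ctr) * (h^2 * R))"
      by (rule mult_left_mono[OF a2]) (use cPi in auto)
    then show ?thesis using a1 by (simp add: mult.assoc)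
  qed
  have b: "Wn / h^2 + WG + ht^2 / h^2 * WT \<le> 2 * R + 2 * cPi * (1 + ctr) * R"
  proof -
    have "Wn / h^2 \<le> (2*V + 2*Q) / h^2" using Wn h2 by (simp add: divide_right_mono)
    moreover have "ht^2 / h^2 * WT \<le> ht^2 / h^2 * (2*T + 2*Dq)" using WT h2 by (intro mult_left_mono) auto
    ultimately have "Wn / h^2 + WG + ht^2 / h^2 * WT \<le> (2*V + 2*Q) / h^2 + Gx + ht^2 / h^2 * (2*T + 2*Dq)"
      using WG by linarith
    also have "\<dots> = 2 * (V / h^2 + ht^2 / h^2 * T) + Gx + 2 * ((Q + ht^2 * Dq) / h^2)"
      using h2 by (simp add: field_simps)
    also have "(Q + ht^2 * Dq) / h^2 \<le> cPi * (1 + ctr) * R"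
      using a h2 by (simp add: divide_le_eq mult.commute mult.left_commute)
    finally have "Wn / h^2 + WG + ht^2 / h^2 * WT \<le> 2 * (V / h^2 + ht^2 / h^2 * T) + Gx + 2 * (cPi * (1 + ctr) * R)"
      by linarith
    moreover have "2 * (V / h^2 + ht^2 / h^2 * T) + Gx \<le> 2 * R"
    proof -
      have "Gx \<ge> 0" using GG nn by linarith
      then show ?thesis unfolding R_def by (simp add: algebra_simps)
    qed
    ultimately show ?thesis by linarith
  qed
  have Rw0: "0 \<le> Wn / h^2 + WG + ht^2 / h^2 * WT" using nn h2 by auto
  have m1: "m \<ge> 1" "c \<le> m" unfolding m_def by auto
  have c: "Sw \<le> m * (2 * R + 2 * cPi * (1 + ctr) * R)"
  proof -
    have "c * (Wn / h^2 + WG + ht^2 / h^2 * WT) \<le> m * (Wn / h^2 + WG + ht^2 / h^2 * WT)"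
      using m1 Rw0 by (intro mult_right_mono) auto
    also have "\<dots> \<le> m * (2 * R + 2 * cPi * (1 + ctr) * R)" using b m1 by (intro mult_left_mono) auto
    finally show ?thesis using Sw by linarith
  qed
  have d: "G \<le> m * A * R"
  proof -
    have "A \<ge> 1" unfolding A_def using ctr cPi by simp
    then have "1 \<le> m * A" using m1 by (metis mult_mono' less_le_trans mult_1 zero_less_one order.trans zero_le_one)
    then have "R \<le> m * A * R" using R0 by (metis mult_right_mono mult_1)
    then show ?thesis using GG GxR by linarith
  qed
  have "G + Sw \<le> 3 * m * A * R"
    using c d unfolding A_def by (simp add: algebra_simps)
  then have "\<nu> * (G + Sw) \<le> \<nu> * (3 * m * A * R)" using nu by (intro mult_left_mono) auto
  then show ?thesis unfolding R_def A_def m_def by (simp add: algebra_simps)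
qed



lemma ex_Basis: "ex i \<in> (Basis :: 'd::finite pt set)"
  unfolding ex_def Basis_prod_def by auto

lemma et_Basis: "et \<in> (Basis :: 'd::finite pt set)"
  unfolding et_def Basis_prod_def by auto

lemma element:
  fixes Kx :: "(real^'d::finite) set" and t0 t1 :: real
    and Se :: "('d pt \<Rightarrow> real) \<Rightarrow> ('d pt \<Rightarrow> real) \<Rightarrow> real"
    and \<nu> cstar ctr cPi :: real and p :: nat and v :: "'d pt \<Rightarrow> real"
    and gx :: "'d \<Rightarrow> 'd pt \<Rightarrow> real" and gt :: "'d pt \<Rightarrow> real"
    and tr :: "real^'d \<Rightarrow> real" and q :: "'d pt \<Rightarrow> real"
  assumes poly: "polytopal Kx" and tt: "t0 < t1" and nu: "\<nu> > 0" and p_ge: "p \<ge> 1"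
    and ctr_pos: "ctr > 0" and cPi_pos: "cPi > 0"
    and S_bound: "\<forall>w gwx gwt. H1w (Kx \<times> {t0<..<t1}) w gwx gwt \<longrightarrow>
                  Se w w \<le> cstar * rhsK Kx t0 t1 w gwx gwt"
    and ctr: "\<forall>w gwx gwt trw. H1w (Kx \<times> {t0<..<t1}) w gwx gwt
                  \<and> bottom_trace Kx t0 t1 w gwt trw \<longrightarrow>
                  (t1 - t0) * nsq Kx trw
                    \<le> ctr * (nsq (Kx \<times> {t0<..<t1}) w
                             + (t1 - t0)^2 * nsq (Kx \<times> {t0<..<t1}) gwt)"
    and cPi: "\<forall>qq r. ppoly p qq \<and> is_tproj (Kx \<times> {t0<..<t1}) p qq r \<longrightarrow>
                  nsq (Kx \<times> {t0<..<t1}) qq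
                  + (diameter Kx)^2 * gradsq (Kx \<times> {t0<..<t1}) qq
                  + (t1 - t0)^2 * nsq (Kx \<times> {t0<..<t1}) (dt qq)
                \<le> cPi * ((diameter Kx)^2 * gradsq (Kx \<times> {t0<..<t1}) qq
                         + nsq (Kx \<times> {t0<..<t1}) r
                         + (t1 - t0) * measure lborel Kx * (mean Kx (\<lambda>x. qq (x, t0)))^2)"
    and vH: "H1w (Kx \<times> {t0<..<t1}) v gx gt"
    and vtr: "bottom_trace Kx t0 t1 v gt tr"
    and qP: "is_PiN p Kx t0 t1 v gx tr q"
  shows "\<nu> * gradsq (Kx \<times> {t0<..<t1}) q + \<nu> * Se (\<lambda>z. v z - q z) (\<lambda>z. v z - q z)
           \<le> 3 * max 1 cstar * \<nu> * (1 + (1 + ctr) * cPi) * rhsK Kx t0 t1 v gx gt"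
proof -
  define K where "K = Kx \<times> {t0<..<t1}"
  define M where "M = restrict_space lborel K"
  have Kxo: "open Kx" and Kxb: "bounded Kx" and diam: "diameter Kx > 0"
    using polytopal_facts[OF poly] by auto
  have Kxs: "Kx \<in> sets lborel" using Kxo by simp
  have Ko: "open K" unfolding K_def using Kxo by (simp add: open_Times)
  have Kb: "bounded K" unfolding K_def using Kxb by (simp add: bounded_Times)
  have Ks: "K \<in> sets lborel" using Ko by simp
  have fin: "finite_measure M" unfolding M_def by (rule fin_restrict[OF Kb Ks])
  have qpp: "ppoly p q" using qP unfolding is_PiN_def by blast
  have qC: "C1 q" by (rule ppoly_C1[OF qpp])
  have contL2: "L2M M f" if "continuous_on UNIV f" for f unfolding M_def by (rule cont_L2M[OF Kb Ks that])
  have qL: "L2M M q" by (rule contL2[OF C1_cont[OF qC]])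
  have dqL: "L2M M (dx i q)" for i unfolding dx_def by (rule contL2[OF C1_deriv_cont[OF qC]])
  have dtqL: "L2M M (dt q)" unfolding dt_def by (rule contL2[OF C1_deriv_cont[OF qC]])
  have vL: "L2M M v" and gxL: "\<And>i. L2M M (gx i)" and gtL: "L2M M gt"
    and wdx: "\<And>i. weak_deriv K v (ex i) (gx i)" and wdt: "weak_deriv K v et gt"
    using vH unfolding H1w_def K_def[symmetric] bridge_L2[OF Ks] M_def by auto
  have wH: "H1w K (\<lambda>z. v z - q z) (\<lambda>i z. gx i z - dx i q z) (\<lambda>z. gt z - dt q z)"
    unfolding H1w_def bridge_L2[OF Ks] M_def[symmetric]
  proof (intro conjI allI)
    show "L2M M (\<lambda>z. v z - q z)" by (rule L2M_diff[OF vL qL])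
    show "L2M M (\<lambda>z. gx i z - dx i q z)" for i by (rule L2M_diff[OF gxL dqL])
    show "L2M M (\<lambda>z. gt z - dt q z)" by (rule L2M_diff[OF gtL dtqL])
    show "weak_deriv K (\<lambda>z. v z - q z) (ex i) (\<lambda>z. gx i z - dx i q z)" for i
      unfolding dx_def
      by (rule weak_deriv_diff[OF Ks Kb _ _ wdx qC ex_Basis]) (use vL gxL in \<open>auto simp: M_def\<close>)
    show "weak_deriv K (\<lambda>z. v z - q z) et (\<lambda>z. gt z - dt q z)"
      unfolding dt_def
      by (rule weak_deriv_diff[OF Ks Kb _ _ wdt qC et_Basis]) (use vL gtL in \<open>auto simp: M_def\<close>)
  qed
  have Sw: "Se (\<lambda>z. v z - q z) (\<lambda>z. v z - q z)
      \<le> cstar * rhsK Kx t0 t1 (\<lambda>z. v z - q z) (\<lambda>i z. gx i z - dx i q z) (\<lambda>z. gt z - dt q z)"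
    using S_bound wH unfolding K_def by blast
  define I where "I f = integral\<^sup>L M f" for f :: "'d pt \<Rightarrow> real"
  have nsqI: "nsq K f = I (\<lambda>z. (f z)^2)" for f unfolding I_def M_def bridge_nsq[OF Ks] ..
  have intI: "(LINT z:K|lborel. f z) = I f" for f unfolding I_def M_def bridge_int[OF Ks] ..
  have orth: "(\<Sum>i\<in>UNIV. I (\<lambda>z. dx i q z * (dx i q z - gx i z))) = 0"
    using qP qpp unfolding is_PiN_def K_def[symmetric] intI by blast
  have WGeq: "(\<Sum>i\<in>UNIV. nsq K (\<lambda>z. gx i z - dx i q z))
      = (\<Sum>i\<in>UNIV. nsq K (gx i)) - gradsq K q"
  proof -
    have "(\<Sum>i\<in>UNIV. nsq K (\<lambda>z. gx i z - dx i q z))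
        = (\<Sum>i\<in>UNIV. I (\<lambda>z. (gx i z)^2) - I (\<lambda>z. (dx i q z)^2) + 2 * I (\<lambda>z. dx i q z * (dx i q z - gx i z)))"
      unfolding nsqI I_def by (rule sum.cong[OF refl], rule sq_diff_expand[OF gxL dqL])
    also have "\<dots> = (\<Sum>i\<in>UNIV. I (\<lambda>z. (gx i z)^2)) - (\<Sum>i\<in>UNIV. I (\<lambda>z. (dx i q z)^2))
                   + 2 * (\<Sum>i\<in>UNIV. I (\<lambda>z. dx i q z * (dx i q z - gx i z)))"
      by (simp add: sum.distrib sum_subtractf sum_distrib_left)
    finally show ?thesis unfolding orth gradsq_def nsqI by simp
  qed
  have nsq0: "0 \<le> nsq K f" for f unfolding nsqI I_def by (rule nsq_nonneg)
  have WG0: "0 \<le> (\<Sum>i\<in>UNIV. nsq K (\<lambda>z. gx i z - dx i q z))" by (intro sum_nonneg nsq0)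
  have G0: "0 \<le> gradsq K q" unfolding gradsq_def by (intro sum_nonneg nsq0)
  have GG: "gradsq K q \<le> (\<Sum>i\<in>UNIV. nsq K (gx i))" using WGeq WG0 by linarith
  have WG: "(\<Sum>i\<in>UNIV. nsq K (\<lambda>z. gx i z - dx i q z)) \<le> (\<Sum>i\<in>UNIV. nsq K (gx i))" using WGeq G0 by linarith
  have Wn: "nsq K (\<lambda>z. v z - q z) \<le> 2 * nsq K v + 2 * nsq K q"
    unfolding nsqI I_def by (rule sq_diff_le[OF vL qL])
  have WT: "nsq K (\<lambda>z. gt z - dt q z) \<le> 2 * nsq K gt + 2 * nsq K (dt q)"
    unfolding nsqI I_def by (rule sq_diff_le[OF gtL dtqL])
  have tL2: "L2M M s" if "tpoly m s" for m s by (rule contL2[OF tpoly_cont[OF that]])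
  have eL2: "L2M M (\<lambda>z. (snd z)^k)" for k by (rule contL2) (auto intro!: continuous_intros)
  have ex: "\<exists>r. tpoly (p - 1) r \<and> (\<forall>s. tpoly (p - 1) s \<longrightarrow> integral\<^sup>L M (\<lambda>z. (q z - r z) * s z) = 0)"
    by (rule tproj_exists[where M=M]) (auto intro: tL2 eL2 qL)
  obtain r where r: "tpoly (p - 1) r" "\<And>s. tpoly (p - 1) s \<Longrightarrow> I (\<lambda>z. (q z - r z) * s z) = 0"
    using ex unfolding I_def by blast
  have tproj: "is_tproj K p q r" unfolding is_tproj_def intI using r by blast
  have rL: "L2M M r" by (rule tL2[OF r(1)])
  have Rr: "nsq K r \<le> nsq K v"
  proof -
    have e1: "I (\<lambda>z. (q z - r z) * r z) = 0" by (rule r(2)[OF r(1)])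
    have e2: "I (\<lambda>z. r z * (q z - v z)) = 0" using qP r(1) unfolding is_PiN_def K_def[symmetric] intI by blast
    have i: "integrable M (\<lambda>z. q z * r z)" "integrable M (\<lambda>z. r z * r z)" "integrable M (\<lambda>z. r z * v z)"
      using L2M_prod[OF qL rL] L2M_prod[OF rL rL] L2M_prod[OF rL vL] by auto
    have "I (\<lambda>z. (q z - r z) * r z) = I (\<lambda>z. q z * r z) - I (\<lambda>z. r z * r z)"
      unfolding I_def using i by (simp add: algebra_simps)
    moreover have "I (\<lambda>z. r z * (q z - v z)) = I (\<lambda>z. q z * r z) - I (\<lambda>z. r z * v z)"
      unfolding I_def using i by (simp add: algebra_simps)
    ultimately have "I (\<lambda>z. r z * r z) = I (\<lambda>z. r z * v z)" using e1 e2 by linarith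
    then show ?thesis unfolding nsqI I_def by (rule proj_le[OF rL vL])
  qed
  have trL2: "L2 Kx tr" using vtr unfolding bottom_trace_def by blast
  have qt0: "continuous_on UNIV (\<lambda>x. q (x, t0))"
    by (rule continuous_on_compose2[OF C1_cont[OF qC]]) (auto intro!: continuous_intros)
  have meq: "(LINT x:Kx|lborel. q (x, t0) - tr x) = 0" using qP unfolding is_PiN_def by blast
  have Mn1: "measure lborel Kx * (mean Kx (\<lambda>x. q (x, t0)))^2 \<le> nsq Kx tr"
    by (rule mean_sq_le[OF Kxb Kxs trL2 qt0 meq])
  have Mn2: "(t1 - t0) * nsq Kx tr \<le> ctr * (nsq K v + (t1 - t0)^2 * nsq K gt)"
    using ctr vH vtr unfolding K_def by blast
  have Mn: "(t1 - t0) * measure lborel Kx * (mean Kx (\<lambda>x. q (x, t0)))^2 \<le> ctr * (nsq K v + (t1 - t0)^2 * nsq K gt)"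
  proof -
    have "(t1 - t0) * (measure lborel Kx * (mean Kx (\<lambda>x. q (x, t0)))^2) \<le> (t1 - t0) * nsq Kx tr"
      using Mn1 tt by (intro mult_left_mono) auto
    then show ?thesis using Mn2 by (simp add: mult.assoc)
  qed
  have cP: "nsq K q + (diameter Kx)^2 * gradsq K q + (t1 - t0)^2 * nsq K (dt q)
      \<le> cPi * ((diameter Kx)^2 * gradsq K q + nsq K r + (t1 - t0) * measure lborel Kx * (mean Kx (\<lambda>x. q (x, t0)))^2)"
    using cPi qpp tproj unfolding K_def by blast
  show ?thesis
    unfolding K_def[symmetric] rhsK_def
    by (rule final_arith[OF nu ctr_pos cPi_pos diam nsq0 nsq0 G0 nsq0 WG0 nsq0 WG GG Wn WT Rr Mn cP])
       (use Sw in \<open>simp add: rhsK_def K_def\<close>)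
qed


theorem proposition2p11:
  fixes E :: "'e set"
    and Kx :: "'e \<Rightarrow> (real^'d::finite) set"
    and t0 t1 :: "'e \<Rightarrow> real"
    and S :: "'e \<Rightarrow> ('d pt \<Rightarrow> real) \<Rightarrow> ('d pt \<Rightarrow> real) \<Rightarrow> real"
    and \<nu> cstar ctr cPi :: real
    and p :: nat
    and v :: "'d pt \<Rightarrow> real"
    and gx :: "'e \<Rightarrow> 'd \<Rightarrow> 'd pt \<Rightarrow> real"
    and gt :: "'e \<Rightarrow> 'd pt \<Rightarrow> real"
    and tr :: "'e \<Rightarrow> real^'d \<Rightarrow> real"
    and q :: "'e \<Rightarrow> 'd pt \<Rightarrow> real"
  assumes dim: "CARD('d) \<le> 3"
    and nu_pos: "\<nu> > 0"
    and p_ge: "p \<ge> 1"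
    and fin: "finite E"
    and elem: "\<forall>e\<in>E. polytopal (Kx e) \<and> t0 e < t1 e"
    and S_sym: "\<forall>e\<in>E. \<forall>w1 w2. (\<exists>g h. H1w (Kx e \<times> {t0 e<..<t1 e}) w1 g h)
                  \<and> (\<exists>g h. H1w (Kx e \<times> {t0 e<..<t1 e}) w2 g h) \<longrightarrow> S e w1 w2 = S e w2 w1"
    and S_bilin: "\<forall>e\<in>E. \<forall>w1 w2 w3 a b. (\<exists>g h. H1w (Kx e \<times> {t0 e<..<t1 e}) w1 g h)
                  \<and> (\<exists>g h. H1w (Kx e \<times> {t0 e<..<t1 e}) w2 g h)
                  \<and> (\<exists>g h. H1w (Kx e \<times> {t0 e<..<t1 e}) w3 g h) \<longrightarrow>
                  S e (\<lambda>z. a * w1 z + b * w2 z) w3 = a * S e w1 w3 + b * S e w2 w3"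
    and S_psd: "\<forall>e\<in>E. \<forall>w. (\<exists>g h. H1w (Kx e \<times> {t0 e<..<t1 e}) w g h) \<longrightarrow> S e w w \<ge> 0"
    and S_bound: "\<forall>e\<in>E. \<forall>w gwx gwt. H1w (Kx e \<times> {t0 e<..<t1 e}) w gwx gwt \<longrightarrow>
                  S e w w \<le> cstar * rhsK (Kx e) (t0 e) (t1 e) w gwx gwt"
    and ctr_pos: "ctr > 0"
    and ctr: "\<forall>e\<in>E. \<forall>w gwx gwt trw. H1w (Kx e \<times> {t0 e<..<t1 e}) w gwx gwt
                  \<and> bottom_trace (Kx e) (t0 e) (t1 e) w gwt trw \<longrightarrow>
                  (t1 e - t0 e) * nsq (Kx e) trw
                    \<le> ctr * (nsq (Kx e \<times> {t0 e<..<t1 e}) w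
                             + (t1 e - t0 e)^2 * nsq (Kx e \<times> {t0 e<..<t1 e}) gwt)"
    and cPi_pos: "cPi > 0"
    and cPi: "\<forall>e\<in>E. \<forall>qq r. ppoly p qq \<and> is_tproj (Kx e \<times> {t0 e<..<t1 e}) p qq r \<longrightarrow>
                  nsq (Kx e \<times> {t0 e<..<t1 e}) qq
                  + (diameter (Kx e))^2 * gradsq (Kx e \<times> {t0 e<..<t1 e}) qq
                  + (t1 e - t0 e)^2 * nsq (Kx e \<times> {t0 e<..<t1 e}) (dt qq)
                \<le> cPi * ((diameter (Kx e))^2 * gradsq (Kx e \<times> {t0 e<..<t1 e}) qq
                         + nsq (Kx e \<times> {t0 e<..<t1 e}) r
                         + (t1 e - t0 e) * measure lborel (Kx e) * (mean (Kx e) (\<lambda>x. qq (x, t0 e)))^2)"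
    and v_H1: "\<forall>e\<in>E. H1w (Kx e \<times> {t0 e<..<t1 e}) v (gx e) (gt e)
                  \<and> bottom_trace (Kx e) (t0 e) (t1 e) v (gt e) (tr e)"
    and q_PiN: "\<forall>e\<in>E. is_PiN p (Kx e) (t0 e) (t1 e) v (gx e) (tr e) (q e)"
  shows "(\<forall>e\<in>E. \<nu> * gradsq (Kx e \<times> {t0 e<..<t1 e}) (q e)
                 + \<nu> * S e (\<lambda>z. v z - q e z) (\<lambda>z. v z - q e z)
               \<le> 3 * max 1 cstar * \<nu> * (1 + (1 + ctr) * cPi)
                   * rhsK (Kx e) (t0 e) (t1 e) v (gx e) (gt e))
       \<and> (\<Sum>e\<in>E. \<nu> * gradsq (Kx e \<times> {t0 e<..<t1 e}) (q e)
                 + \<nu> * S e (\<lambda>z. v z - q e z) (\<lambda>z. v z - q e z))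
           \<le> 3 * max 1 cstar * \<nu> * (1 + (1 + ctr) * cPi)
               * (\<Sum>e\<in>E. rhsK (Kx e) (t0 e) (t1 e) v (gx e) (gt e))"
  proof -
  have each: "\<forall>e\<in>E. \<nu> * gradsq (Kx e \<times> {t0 e<..<t1 e}) (q e)
                 + \<nu> * S e (\<lambda>z. v z - q e z) (\<lambda>z. v z - q e z)
               \<le> 3 * max 1 cstar * \<nu> * (1 + (1 + ctr) * cPi)
                   * rhsK (Kx e) (t0 e) (t1 e) v (gx e) (gt e)"
  proof
    fix e assume e: "e \<in> E"
    show "\<nu> * gradsq (Kx e \<times> {t0 e<..<t1 e}) (q e)
                 + \<nu> * S e (\<lambda>z. v z - q e z) (\<lambda>z. v z - q e z)
               \<le> 3 * max 1 cstar * \<nu> * (1 + (1 + ctr) * cPi)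
                   * rhsK (Kx e) (t0 e) (t1 e) v (gx e) (gt e)"
    proof (rule element[where Se="S e"])
      show "polytopal (Kx e)" "t0 e < t1 e" using elem e by auto
      show "\<forall>w gwx gwt. H1w (Kx e \<times> {t0 e<..<t1 e}) w gwx gwt \<longrightarrow>
                  S e w w \<le> cstar * rhsK (Kx e) (t0 e) (t1 e) w gwx gwt" using S_bound e by blast
      show "\<forall>w gwx gwt trw. H1w (Kx e \<times> {t0 e<..<t1 e}) w gwx gwt
                  \<and> bottom_trace (Kx e) (t0 e) (t1 e) w gwt trw \<longrightarrow>
                  (t1 e - t0 e) * nsq (Kx e) trw
                    \<le> ctr * (nsq (Kx e \<times> {t0 e<..<t1 e}) w
                             + (t1 e - t0 e)^2 * nsq (Kx e \<times> {t0 e<..<t1 e}) gwt)" using ctr e by blast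
      show "\<forall>qq r. ppoly p qq \<and> is_tproj (Kx e \<times> {t0 e<..<t1 e}) p qq r \<longrightarrow>
                  nsq (Kx e \<times> {t0 e<..<t1 e}) qq
                  + (diameter (Kx e))^2 * gradsq (Kx e \<times> {t0 e<..<t1 e}) qq
                  + (t1 e - t0 e)^2 * nsq (Kx e \<times> {t0 e<..<t1 e}) (dt qq)
                \<le> cPi * ((diameter (Kx e))^2 * gradsq (Kx e \<times> {t0 e<..<t1 e}) qq
                         + nsq (Kx e \<times> {t0 e<..<t1 e}) r
                         + (t1 e - t0 e) * measure lborel (Kx e) * (mean (Kx e) (\<lambda>x. qq (x, t0 e)))^2)"
        using cPi e by blast
      show "H1w (Kx e \<times> {t0 e<..<t1 e}) v (gx e) (gt e)" "bottom_trace (Kx e) (t0 e) (t1 e) v (gt e) (tr e)"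
        using v_H1 e by auto
      show "is_PiN p (Kx e) (t0 e) (t1 e) v (gx e) (tr e) (q e)" using q_PiN e by blast
    qed (use nu_pos p_ge ctr_pos cPi_pos in auto)
  qed
  moreover have "(\<Sum>e\<in>E. \<nu> * gradsq (Kx e \<times> {t0 e<..<t1 e}) (q e)
                 + \<nu> * S e (\<lambda>z. v z - q e z) (\<lambda>z. v z - q e z))
           \<le> (\<Sum>e\<in>E. 3 * max 1 cstar * \<nu> * (1 + (1 + ctr) * cPi)
               * rhsK (Kx e) (t0 e) (t1 e) v (gx e) (gt e))"
    by (rule sum_mono) (use each in blast)
  ultimately show ?thesis by (simp add: sum_distrib_left)
qed

end
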